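(* Let $V$ be a real vector space of dimension $n$ and $k\ge2$ with $k\le n-1$. For standard isotropic subspaces $L\subseteq V\oplus\wedge^kV^*$ one has the implications $$\text{(C2s)}\Rightarrow\text{(C1)}\Leftrightarrow\text{(C3s)}\Rightarrow\text{(C2w) and (C3w)},$$ and these are distinct notions: there exist standard isotropic subspaces (for suitable $V$ and $k\ge2$) satisfying (C3w) but not (C2w); satisfying (C2w) but not (C3w); satisfying both (C2w) and (C3w) but not (C1); and satisfying (C3s) but not (C2s).
   Context: On $V\oplus\wedge^kV^*$ the pairing is $\langle X+\alpha,Y+\beta\rangle=i_X\beta+i_Y\alpha\in\wedge^{k-1}V^*$, with orthogonal $L^\perp$. $\mathrm{pr}_1,\mathrm{pr}_2$ are the projections onto $V$, $\wedge^kV^*$; $E=\mathrm{pr}_1(L)$, $A_L=L\cap\wedge^kV^*$. For $S\subseteq\wedge^kV^*$, $S^\circ=\{X\in V\mid i_X\eta=0\ \forall\eta\in S\}$; for $W\subseteq V$, $\mathrm{Ann}(W)=\{\alpha\in\wedge^kV^*\mid i_Y\alpha=0\ \forall Y\in W\}$. An isotropic ($L\subseteq L^\perp$) subspace is standard if $\mathrm{Ann}(E)^\circ=E$ (equivalently $\dim E=n$ or $\dim E\le n-k$). Conditions: (C1) $L=L^\perp$; (C2w) $L\subseteq L^\perp$ and $L\cap V=\mathrm{pr}_2(L)^\circ$; (C2s) $L\subseteq L^\perp$ and $\mathrm{Ann}(L\cap V)=\mathrm{pr}_2(L)$; (C3w) $L\subseteq L^\perp$ and $E=A_L^\circ$;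 (C3s) $L\subseteq L^\perp$ and $\mathrm{Ann}(E)=A_L$. *)

theory Defs
  imports "HOL-Analysis.Analysis"
begin

text \<open>Model: the n-dimensional real vector space V is the coordinate space R^n, realised as
  functions nat => real vanishing from index n on.  A k-form on V is a function taking a
  sequence of vectors (nat => vec) to a real number, that depends only on the first k
  vectors, vanishes unless these lie in V, and is multilinear and alternating in them
  (so that equality of forms is plain function equality).\<close>

type_synonym vec = "nat \<Rightarrow> real"
type_synonym form = "(nat \<Rightarrow> vec) \<Rightarrow> real"

definition Rn :: "nat \<Rightarrow> vec set" where
  "Rn n = {x. \<forall>i\<ge>n. x i = 0}"

definition vzero :: vec where "vzero = (\<lambda>i. 0)"
definition vadd :: "vec \<Rightarrow> vec \<Rightarrow> vec" where "vadd x y = (\<lambda>i. x i + y i)"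
definition vscale :: "real \<Rightarrow> vec \<Rightarrow> vec" where "vscale c x = (\<lambda>i. c * x i)"

definition is_form :: "nat \<Rightarrow> nat \<Rightarrow> form \<Rightarrow> bool" where
  "is_form n k \<alpha> \<longleftrightarrow>
     (\<forall>v w. (\<forall>i<k. v i = w i) \<longrightarrow> \<alpha> v = \<alpha> w) \<and>
     (\<forall>v. (\<exists>i<k. v i \<notin> Rn n) \<longrightarrow> \<alpha> v = 0) \<and>
     (\<forall>v i x y a b. i < k \<and> (\<forall>j<k. v j \<in> Rn n) \<and> x \<in> Rn n \<and> y \<in> Rn n \<longrightarrow>
        \<alpha> (v(i := vadd (vscale a x) (vscale b y))) = a * \<alpha> (v(i := x)) + b * \<alpha> (v(i := y))) \<and>
     (\<forall>v i j. i < k \<and> j < k \<and> i \<noteq> j \<and> v i = v j \<longrightarrow> \<alpha> v = 0)"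

definition Forms :: "nat \<Rightarrow> nat \<Rightarrow> form set" where
  "Forms n k = {\<alpha>. is_form n k \<alpha>}"

definition fzero :: form where "fzero = (\<lambda>v. 0)"
definition fadd :: "form \<Rightarrow> form \<Rightarrow> form" where "fadd \<alpha> \<beta> = (\<lambda>v. \<alpha> v + \<beta> v)"
definition fscale :: "real \<Rightarrow> form \<Rightarrow> form" where "fscale c \<alpha> = (\<lambda>v. c * \<alpha> v)"

definition contr :: "vec \<Rightarrow> form \<Rightarrow> form" where
  "contr X \<alpha> = (\<lambda>v. \<alpha> (case_nat X v))"

definition pairing :: "vec \<times> form \<Rightarrow> vec \<times> form \<Rightarrow> form" where
  "pairing p q = fadd (contr (fst p) (snd q)) (contr (fst q) (snd p))"

definition is_subspace :: "nat \<Rightarrow> nat \<Rightarrow> (vec \<times> form) set \<Rightarrow> bool" where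
  "is_subspace n k L \<longleftrightarrow>
     L \<subseteq> Rn n \<times> Forms n k \<and> (vzero, fzero) \<in> L \<and>
     (\<forall>p\<in>L. \<forall>q\<in>L. (vadd (fst p) (fst q), fadd (snd p) (snd q)) \<in> L) \<and>
     (\<forall>c. \<forall>p\<in>L. (vscale c (fst p), fscale c (snd p)) \<in> L)"

definition orth :: "nat \<Rightarrow> nat \<Rightarrow> (vec \<times> form) set \<Rightarrow> (vec \<times> form) set" where
  "orth n k L = {p \<in> Rn n \<times> Forms n k. \<forall>q\<in>L. pairing p q = fzero}"

definition isotropic :: "nat \<Rightarrow> nat \<Rightarrow> (vec \<times> form) set \<Rightarrow> bool" where
  "isotropic n k L \<longleftrightarrow> L \<subseteq> orth n k L"

definition polar :: "nat \<Rightarrow> form set \<Rightarrow> vec set" where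
  "polar n S = {X \<in> Rn n. \<forall>\<eta>\<in>S. contr X \<eta> = fzero}"

definition Ann :: "nat \<Rightarrow> nat \<Rightarrow> vec set \<Rightarrow> form set" where
  "Ann n k W = {\<alpha> \<in> Forms n k. \<forall>Y\<in>W. contr Y \<alpha> = fzero}"

definition prE :: "(vec \<times> form) set \<Rightarrow> vec set" where "prE L = fst ` L"
definition pr2 :: "(vec \<times> form) set \<Rightarrow> form set" where "pr2 L = snd ` L"
definition AL :: "(vec \<times> form) set \<Rightarrow> form set" where "AL L = {\<alpha>. (vzero, \<alpha>) \<in> L}"
definition LV :: "(vec \<times> form) set \<Rightarrow> vec set" where "LV L = {X. (X, fzero) \<in> L}"

definition standard :: "nat \<Rightarrow> nat \<Rightarrow> (vec \<times> form) set \<Rightarrow> bool" where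
  "standard n k L \<longleftrightarrow> polar n (Ann n k (prE L)) = prE L"

definition C1 :: "nat \<Rightarrow> nat \<Rightarrow> (vec \<times> form) set \<Rightarrow> bool" where
  "C1 n k L \<longleftrightarrow> L = orth n k L"
definition C2w :: "nat \<Rightarrow> nat \<Rightarrow> (vec \<times> form) set \<Rightarrow> bool" where
  "C2w n k L \<longleftrightarrow> isotropic n k L \<and> LV L = polar n (pr2 L)"
definition C2s :: "nat \<Rightarrow> nat \<Rightarrow> (vec \<times> form) set \<Rightarrow> bool" where
  "C2s n k L \<longleftrightarrow> isotropic n k L \<and> Ann n k (LV L) = pr2 L"
definition C3w :: "nat \<Rightarrow> nat \<Rightarrow> (vec \<times> form) set \<Rightarrow> bool" where
  "C3w n k L \<longleftrightarrow> isotropic n k L \<and> prE L = polar n (AL L)"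
definition C3s :: "nat \<Rightarrow> nat \<Rightarrow> (vec \<times> form) set \<Rightarrow> bool" where
  "C3s n k L \<longleftrightarrow> isotropic n k L \<and> Ann n k (prE L) = AL L"

definition std_iso :: "nat \<Rightarrow> nat \<Rightarrow> (vec \<times> form) set \<Rightarrow> bool" where
  "std_iso n k L \<longleftrightarrow> is_subspace n k L \<and> isotropic n k L \<and> standard n k L"

end

theory Submission
  imports Defs "HOL-Library.Function_Algebras"
begin

lemma Rn_add[simp]: "x \<in> Rn n \<Longrightarrow> y \<in> Rn n \<Longrightarrow> vadd x y \<in> Rn n"
  by (simp add: Rn_def vadd_def)
lemma Rn_scale[simp]: "x \<in> Rn n \<Longrightarrow> vscale c x \<in> Rn n"
  by (simp add: Rn_def vscale_def)
lemma Rn_zero[simp]: "vzero \<in> Rn n"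
  by (simp add: Rn_def vzero_def)

lemma form_dep: "\<alpha> \<in> Forms n k \<Longrightarrow> (\<forall>i<k. v i = w i) \<Longrightarrow> \<alpha> v = \<alpha> w"
  unfolding Forms_def is_form_def by blast
lemma form_van: "\<alpha> \<in> Forms n k \<Longrightarrow> i < k \<Longrightarrow> v i \<notin> Rn n \<Longrightarrow> \<alpha> v = 0"
  unfolding Forms_def is_form_def by blast
lemma form_lin: "\<alpha> \<in> Forms n k \<Longrightarrow> i < k \<Longrightarrow> (\<forall>j<k. v j \<in> Rn n) \<Longrightarrow> x \<in> Rn n \<Longrightarrow> y \<in> Rn n \<Longrightarrow>
   \<alpha> (v(i := vadd (vscale a x) (vscale b y))) = a * \<alpha> (v(i := x)) + b * \<alpha> (v(i := y))"
  unfolding Forms_def is_form_def by blast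
lemma form_alt: "\<alpha> \<in> Forms n k \<Longrightarrow> i < k \<Longrightarrow> j < k \<Longrightarrow> i \<noteq> j \<Longrightarrow> v i = v j \<Longrightarrow> \<alpha> v = 0"
  unfolding Forms_def is_form_def by blast

lemma vscale1[simp]: "vscale 1 x = x" by (simp add: vscale_def)

lemma form_add_slot:
  assumes "\<alpha> \<in> Forms n k" "i < k" "\<forall>j<k. v j \<in> Rn n" "x \<in> Rn n" "y \<in> Rn n"
  shows "\<alpha> (v(i := vadd x y)) = \<alpha> (v(i := x)) + \<alpha> (v(i := y))"
  using form_lin[OF assms, of 1 1] by simp

lemma form_swap:
  assumes F: "\<alpha> \<in> Forms n k" and ij: "i < k" "j < k" "i \<noteq> j"
  shows "\<alpha> (v(i := v j, j := v i)) = - \<alpha> v"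
proof (cases "\<forall>l<k. v l \<in> Rn n")
  case True
  define f where "f p q = \<alpha> (v(i := p, j := q))" for p q
  let ?x = "v i" and ?y = "v j"
  have R: "\<And>p q. p \<in> Rn n \<Longrightarrow> q \<in> Rn n \<Longrightarrow> \<forall>l<k. (v(i := p, j := q)) l \<in> Rn n"
    using True by auto
  have slot1: "f (vadd p p') q = f p q + f p' q" if "p \<in> Rn n" "p' \<in> Rn n" "q \<in> Rn n" for p p' q
  proof -
    have "f (vadd p p') q = \<alpha> ((v(i := p, j := q))(i := vadd p p'))"
      unfolding f_def using ij by (simp add: fun_upd_twist)
    also have "\<dots> = \<alpha> ((v(i := p, j := q))(i := p)) + \<alpha> ((v(i := p, j := q))(i := p'))"
      by (rule form_add_slot[OF F ij(1) R[OF that(1,3)] that(1,2)])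
    also have "\<dots> = f p q + f p' q"
      unfolding f_def using ij by (simp add: fun_upd_twist)
    finally show ?thesis .
  qed
  have slot2: "f p (vadd q q') = f p q + f p q'" if "p \<in> Rn n" "q \<in> Rn n" "q' \<in> Rn n" for p q q'
  proof -
    have "f p (vadd q q') = \<alpha> ((v(i := p, j := q))(j := vadd q q'))"
      unfolding f_def using ij by (simp add: fun_upd_twist)
    also have "\<dots> = \<alpha> ((v(i := p, j := q))(j := q)) + \<alpha> ((v(i := p, j := q))(j := q'))"
      by (rule form_add_slot[OF F ij(2) R[OF that(1,2)] that(2,3)])
    also have "\<dots> = f p q + f p q'"
      unfolding f_def using ij by (simp add: fun_upd_twist)
    finally show ?thesis .
  qed
  have diag: "f p p = 0" for p
    unfolding f_def using ij by (intro form_alt[OF F, of i j]) auto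
  have xR: "?x \<in> Rn n" and yR: "?y \<in> Rn n" using True ij by auto
  have "0 = f (vadd ?x ?y) (vadd ?x ?y)" by (simp add: diag)
  also have "\<dots> = f ?x ?x + f ?x ?y + (f ?y ?x + f ?y ?y)"
    using slot1 slot2 xR yR by simp
  also have "\<dots> = f ?x ?y + f ?y ?x" by (simp add: diag)
  finally have "f ?y ?x = - f ?x ?y" by simp
  moreover have "f ?x ?y = \<alpha> v" unfolding f_def by simp
  ultimately show ?thesis unfolding f_def by simp
next
  case False
  then obtain l where l: "l < k" "v l \<notin> Rn n" by auto
  have "\<alpha> v = 0" using form_van[OF F l(1), of v] l(2) by simp
  moreover have "\<alpha> (v(i := v j, j := v i)) = 0"
  proof (cases "l = i")
    case True then show ?thesis using ij l by (intro form_van[OF F, of j]) auto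
  next
    case False
    show ?thesis
    proof (cases "l = j")
      case True then show ?thesis using ij l by (intro form_van[OF F, of i]) auto
    next
      case False then show ?thesis using ij l \<open>l \<noteq> i\<close> by (intro form_van[OF F, of l]) auto
    qed
  qed
  ultimately show ?thesis by simp
qed

lemma form_fadd: assumes a: "\<alpha> \<in> Forms n k" and b: "\<beta> \<in> Forms n k" shows "fadd \<alpha> \<beta> \<in> Forms n k"
  unfolding Forms_def mem_Collect_eq is_form_def
proof (intro conjI allI impI)
  fix v w :: "nat \<Rightarrow> vec" assume "\<forall>i<k. v i = w i"
  then show "fadd \<alpha> \<beta> v = fadd \<alpha> \<beta> w" using form_dep[OF a, of v w] form_dep[OF b, of v w] by (simp add: fadd_def)
next
  fix v :: "nat \<Rightarrow> vec" assume "\<exists>i<k. v i \<notin> Rn n"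
  then obtain i where "i < k" "v i \<notin> Rn n" by blast
  then show "fadd \<alpha> \<beta> v = 0" using form_van[OF a] form_van[OF b] by (simp add: fadd_def)
next
  fix v :: "nat \<Rightarrow> vec" and i x y a' b'
  assume h: "i < k \<and> (\<forall>j<k. v j \<in> Rn n) \<and> x \<in> Rn n \<and> y \<in> Rn n"
  show "fadd \<alpha> \<beta> (v(i := vadd (vscale a' x) (vscale b' y))) = a' * fadd \<alpha> \<beta> (v(i := x)) + b' * fadd \<alpha> \<beta> (v(i := y))"
    using h form_lin[OF a, of i v x y a' b'] form_lin[OF b, of i v x y a' b'] by (simp add: fadd_def algebra_simps)
next
  fix v :: "nat \<Rightarrow> vec" and i j assume h: "i < k \<and> j < k \<and> i \<noteq> j \<and> v i = v j"
  then show "fadd \<alpha> \<beta> v = 0" using form_alt[OF a, of i j v] form_alt[OF b, of i j v] by (simp add: fadd_def)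
qed

lemma form_fscale: assumes a: "\<alpha> \<in> Forms n k" shows "fscale c \<alpha> \<in> Forms n k"
  unfolding Forms_def mem_Collect_eq is_form_def
proof (intro conjI allI impI)
  fix v w :: "nat \<Rightarrow> vec" assume "\<forall>i<k. v i = w i"
  then show "fscale c \<alpha> v = fscale c \<alpha> w" using form_dep[OF a, of v w] by (simp add: fscale_def)
next
  fix v :: "nat \<Rightarrow> vec" assume "\<exists>i<k. v i \<notin> Rn n"
  then obtain i where "i < k" "v i \<notin> Rn n" by blast
  then show "fscale c \<alpha> v = 0" using form_van[OF a] by (simp add: fscale_def)
next
  fix v :: "nat \<Rightarrow> vec" and i x y a' b'
  assume h: "i < k \<and> (\<forall>j<k. v j \<in> Rn n) \<and> x \<in> Rn n \<and> y \<in> Rn n"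
  show "fscale c \<alpha> (v(i := vadd (vscale a' x) (vscale b' y))) = a' * fscale c \<alpha> (v(i := x)) + b' * fscale c \<alpha> (v(i := y))"
    using h form_lin[OF a, of i v x y a' b'] by (simp add: fscale_def algebra_simps)
next
  fix v :: "nat \<Rightarrow> vec" and i j assume h: "i < k \<and> j < k \<and> i \<noteq> j \<and> v i = v j"
  then show "fscale c \<alpha> v = 0" using form_alt[OF a, of i j v] by (simp add: fscale_def)
qed

lemma contr_fzero[simp]: "contr X fzero = fzero" by (simp add: contr_def fzero_def)
lemma contr_fadd: "contr X (fadd \<alpha> \<beta>) = fadd (contr X \<alpha>) (contr X \<beta>)"
  by (simp add: contr_def fadd_def)
lemma contr_fscale: "contr X (fscale c \<alpha>) = fscale c (contr X \<alpha>)"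
  by (simp add: contr_def fscale_def)
lemma fadd_fzero[simp]: "fadd fzero \<alpha> = \<alpha>" "fadd \<alpha> fzero = \<alpha>"
  by (simp_all add: fadd_def fzero_def)

lemma case_nat_upd0: "(case_nat X v)(0 := Z) = case_nat Z v"
  by (rule ext) (simp split: nat.split)

lemma contr_lin:
  assumes F: "\<alpha> \<in> Forms n k" and k: "1 \<le> k" and XY: "X \<in> Rn n" "Y \<in> Rn n"
  shows "contr (vadd (vscale a X) (vscale b Y)) \<alpha> = fadd (fscale a (contr X \<alpha>)) (fscale b (contr Y \<alpha>))"
proof (rule ext)
  fix v
  show "contr (vadd (vscale a X) (vscale b Y)) \<alpha> v = fadd (fscale a (contr X \<alpha>)) (fscale b (contr Y \<alpha>)) v"
  proof (cases "\<forall>j<k. case_nat X v j \<in> Rn n")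
    case True
    have "\<alpha> ((case_nat X v)(0 := vadd (vscale a X) (vscale b Y))) =
          a * \<alpha> ((case_nat X v)(0 := X)) + b * \<alpha> ((case_nat X v)(0 := Y))"
      using form_lin[OF F _ True XY] k by simp
    then show ?thesis by (simp add: contr_def fadd_def fscale_def case_nat_upd0)
  next
    case False
    then obtain j where j: "j < k" "case_nat X v j \<notin> Rn n" by auto
    then obtain i where i: "j = Suc i" using XY by (cases j) auto
    have z: "\<alpha> (case_nat Z v) = 0" for Z
      using form_van[OF F j(1), of "case_nat Z v"] j i by simp
    show ?thesis by (simp add: contr_def fadd_def fscale_def z)
  qed
qed

lemma vscale0[simp]: "vscale 0 x = vzero" by (simp add: vscale_def vzero_def)
lemma vadd_vzero[simp]: "vadd vzero x = x" "vadd x vzero = x" by (simp_all add: vadd_def vzero_def)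

lemma contr_vzero:
  assumes F: "\<alpha> \<in> Forms n k" and k: "1 \<le> k"
  shows "contr vzero \<alpha> = fzero"
proof -
  have "contr (vadd (vscale 0 vzero) (vscale 0 vzero)) \<alpha> = fadd (fscale 0 (contr vzero \<alpha>)) (fscale 0 (contr vzero \<alpha>))"
    by (rule contr_lin[OF F k]) simp_all
  then show ?thesis by (simp add: fadd_def fscale_def fzero_def)
qed

lemma contr_diff:
  assumes F: "\<alpha> \<in> Forms n k" and k: "1 \<le> k" and XY: "X \<in> Rn n" "Y \<in> Rn n"
  shows "contr (vadd X (vscale (-1) Y)) \<alpha> = fadd (contr X \<alpha>) (fscale (-1) (contr Y \<alpha>))"
  using contr_lin[OF F k XY, of 1 "-1"] by (simp add: fscale_def)



lemma form_fzero: "fzero \<in> Forms n k"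
  unfolding Forms_def is_form_def fzero_def by simp

lemma form_eq_zero:
  assumes F: "\<alpha> \<in> Forms n k" and k: "1 \<le> k" and Z: "\<forall>X\<in>Rn n. contr X \<alpha> = fzero"
  shows "\<alpha> = fzero"
proof (rule ext)
  fix v
  show "\<alpha> v = fzero v"
  proof (cases "v 0 \<in> Rn n")
    case True
    have "\<alpha> v = \<alpha> (case_nat (v 0) (\<lambda>i. v (Suc i)))"
      by (rule form_dep[OF F]) (simp split: nat.split)
    also have "\<dots> = contr (v 0) \<alpha> (\<lambda>i. v (Suc i))" by (simp add: contr_def)
    also have "\<dots> = 0" using Z True by (simp add: fzero_def)
    finally show ?thesis by (simp add: fzero_def)
  next
    case False then show ?thesis using form_van[OF F, of 0 v] k by (simp add: fzero_def)
  qed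
qed

lemma form_ann_slot:
  assumes F: "\<alpha> \<in> Forms n k" and m: "m < k" and C: "contr Y \<alpha> = fzero"
  shows "\<alpha> (v(m := Y)) = 0"
proof -
  have slot0: "\<alpha> (w(0 := Y)) = 0" for w
  proof -
    have "\<alpha> (w(0 := Y)) = \<alpha> (case_nat Y (\<lambda>i. w (Suc i)))"
      by (rule form_dep[OF F]) (simp split: nat.split)
    also have "\<dots> = contr Y \<alpha> (\<lambda>i. w (Suc i))" by (simp add: contr_def)
    finally show ?thesis using C by (simp add: fzero_def)
  qed
  show ?thesis
  proof (cases "m = 0")
    case True then show ?thesis using slot0 by simp
  next
    case False
    have "\<alpha> ((v(m := Y))(0 := (v(m := Y)) m, m := (v(m := Y)) 0)) = - \<alpha> (v(m := Y))"
      by (rule form_swap[OF F]) (use m False in auto)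
    moreover have "(v(m := Y))(0 := (v(m := Y)) m, m := (v(m := Y)) 0) = (v(m := v 0))(0 := Y)"
      using False by (auto simp: fun_eq_iff)
    ultimately show ?thesis using slot0 by simp
  qed
qed

lemma pairing_simp[simp]: "pairing (X, \<alpha>) (Y, \<beta>) = fadd (contr X \<beta>) (contr Y \<alpha>)"
  by (simp add: pairing_def)

lemma sub_mem: "is_subspace n k L \<Longrightarrow> (X, \<alpha>) \<in> L \<Longrightarrow> X \<in> Rn n \<and> \<alpha> \<in> Forms n k"
  unfolding is_subspace_def by blast
lemma sub_add: assumes "is_subspace n k L" "(X, \<alpha>) \<in> L" "(Y, \<beta>) \<in> L" shows "(vadd X Y, fadd \<alpha> \<beta>) \<in> L"
proof -
  have H: "\<forall>p\<in>L. \<forall>q\<in>L. (vadd (fst p) (fst q), fadd (snd p) (snd q)) \<in> L"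
    using assms(1) unfolding is_subspace_def by blast
  show ?thesis using H[rule_format, OF assms(2,3)] by simp
qed
lemma sub_scale: assumes "is_subspace n k L" "(X, \<alpha>) \<in> L" shows "(vscale c X, fscale c \<alpha>) \<in> L"
proof -
  have H: "\<forall>c. \<forall>p\<in>L. (vscale c (fst p), fscale c (snd p)) \<in> L"
    using assms(1) unfolding is_subspace_def by blast
  show ?thesis using H[rule_format, OF assms(2), of c] by simp
qed
lemma sub_zero: "is_subspace n k L \<Longrightarrow> (vzero, fzero) \<in> L"
  unfolding is_subspace_def by blast

lemma iso_pair: "isotropic n k L \<Longrightarrow> (X, \<alpha>) \<in> L \<Longrightarrow> (Y, \<beta>) \<in> L \<Longrightarrow> fadd (contr X \<beta>) (contr Y \<alpha>) = fzero"
  unfolding isotropic_def orth_def by fastforce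

lemma orth_pair: "(X, \<alpha>) \<in> orth n k L \<Longrightarrow> (Y, \<beta>) \<in> L \<Longrightarrow> fadd (contr X \<beta>) (contr Y \<alpha>) = fzero"
  unfolding orth_def by fastforce

lemma orth_mem: "(X, \<alpha>) \<in> orth n k L \<Longrightarrow> X \<in> Rn n \<and> \<alpha> \<in> Forms n k"
  unfolding orth_def by auto

lemma orthI: "X \<in> Rn n \<Longrightarrow> \<alpha> \<in> Forms n k \<Longrightarrow> (\<And>Y \<beta>. (Y, \<beta>) \<in> L \<Longrightarrow> fadd (contr X \<beta>) (contr Y \<alpha>) = fzero)
   \<Longrightarrow> (X, \<alpha>) \<in> orth n k L"
  unfolding orth_def by auto

lemma prE_ex: "Y \<in> prE L \<Longrightarrow> \<exists>\<beta>. (Y, \<beta>) \<in> L"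
  unfolding prE_def by force
lemma pr2_ex: "\<eta> \<in> pr2 L \<Longrightarrow> \<exists>Y. (Y, \<eta>) \<in> L"
  unfolding pr2_def by force

lemma fzero_app[simp]: "fzero v = 0" by (simp add: fzero_def)

lemma fadd_eq_fzero: "fadd a b = fzero \<Longrightarrow> b = fzero \<Longrightarrow> a = fzero"
  by (simp add: fadd_def fzero_def fun_eq_iff)

lemma E_sub_polar_Ann: "prE L \<subseteq> Rn n \<Longrightarrow> prE L \<subseteq> polar n (Ann n k (prE L))"
  unfolding polar_def Ann_def by auto

lemma C1_imp_C3s:
  assumes S: "std_iso n k L" and k: "1 \<le> k" and C: "C1 n k L"
  shows "C3s n k L"
proof -
  have sub: "is_subspace n k L" and iso: "isotropic n k L" using S by (auto simp: std_iso_def)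
  have L: "L = orth n k L" using C by (simp add: C1_def)
  have "Ann n k (prE L) = AL L"
  proof
    show "Ann n k (prE L) \<subseteq> AL L"
    proof
      fix \<alpha> assume a: "\<alpha> \<in> Ann n k (prE L)"
      have "(vzero, \<alpha>) \<in> orth n k L"
      proof (rule orthI)
        show "\<alpha> \<in> Forms n k" using a by (simp add: Ann_def)
        fix Y \<beta> assume "(Y, \<beta>) \<in> L"
        then have "Y \<in> prE L" "\<beta> \<in> Forms n k" using sub_mem[OF sub] by (force simp: prE_def)+
        then show "fadd (contr vzero \<beta>) (contr Y \<alpha>) = fzero"
          using a contr_vzero[OF _ k] by (simp add: Ann_def)
      qed simp
      then show "\<alpha> \<in> AL L" using L by (simp add: AL_def)
    qed
  next
    show "AL L \<subseteq> Ann n k (prE L)"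
    proof
      fix \<alpha> assume a: "\<alpha> \<in> AL L"
      then have aL: "(vzero, \<alpha>) \<in> L" by (simp add: AL_def)
      have "contr Y \<alpha> = fzero" if "Y \<in> prE L" for Y
      proof -
        obtain \<beta> where b: "(Y, \<beta>) \<in> L" using prE_ex[OF \<open>Y \<in> prE L\<close>] by blast
        have "fadd (contr vzero \<beta>) (contr Y \<alpha>) = fzero" by (rule iso_pair[OF iso aL b])
        moreover have "contr vzero \<beta> = fzero" using contr_vzero[of \<beta> n k] k sub_mem[OF sub b] by simp
        ultimately show ?thesis by simp
      qed
      then show "\<alpha> \<in> Ann n k (prE L)" using sub_mem[OF sub aL] by (simp add: Ann_def)
    qed
  qed
  then show ?thesis using iso by (simp add: C3s_def)
qed

lemma C3s_imp_C1:
  assumes S: "std_iso n k L" and k: "1 \<le> k" and C: "C3s n k L"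
  shows "C1 n k L"
proof -
  have sub: "is_subspace n k L" and iso: "isotropic n k L" and st: "standard n k L"
    using S by (auto simp: std_iso_def)
  have A: "Ann n k (prE L) = AL L" using C by (simp add: C3s_def)
  have "orth n k L \<subseteq> L"
  proof
    fix p assume p: "p \<in> orth n k L"
    obtain X \<alpha> where pe: "p = (X, \<alpha>)" by (cases p)
    have XR: "X \<in> Rn n" and aF: "\<alpha> \<in> Forms n k" using orth_mem p pe by blast+
    have "X \<in> polar n (Ann n k (prE L))"
    proof -
      have "contr X \<eta> = fzero" if "\<eta> \<in> Ann n k (prE L)" for \<eta>
      proof -
        have eL: "(vzero, \<eta>) \<in> L" using that A by (simp add: AL_def)
        have "fadd (contr X \<eta>) (contr vzero \<alpha>) = fzero" using orth_pair p pe eL by blast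
        then show ?thesis using contr_vzero[OF aF k] by simp
      qed
      then show ?thesis using XR by (simp add: polar_def)
    qed
    then have "X \<in> prE L" using st by (simp add: standard_def)
    then obtain \<gamma> where g: "(X, \<gamma>) \<in> L" by (auto simp: prE_def)
    have gF: "\<gamma> \<in> Forms n k" using sub_mem[OF sub g] by blast
    define \<delta> where "\<delta> = fadd \<alpha> (fscale (-1) \<gamma>)"
    have dF: "\<delta> \<in> Forms n k" unfolding \<delta>_def by (intro form_fadd form_fscale aF gF)
    have "\<delta> \<in> Ann n k (prE L)"
    proof -
      have "contr Y \<delta> = fzero" if "Y \<in> prE L" for Y
      proof -
        obtain \<beta> where b: "(Y, \<beta>) \<in> L" using prE_ex[OF \<open>Y \<in> prE L\<close>] by blast
        have 1: "fadd (contr X \<beta>) (contr Y \<alpha>) = fzero" using orth_pair p pe b by blast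
        have 2: "fadd (contr X \<beta>) (contr Y \<gamma>) = fzero" by (rule iso_pair[OF iso g b])
        show ?thesis
        proof (rule ext)
          fix v
          from fun_cong[OF 1, of v] fun_cong[OF 2, of v]
          show "contr Y \<delta> v = fzero v" unfolding \<delta>_def by (simp add: contr_def fadd_def fscale_def)
        qed
      qed
      then show ?thesis using dF by (simp add: Ann_def)
    qed
    then have "(vzero, \<delta>) \<in> L" using A by (simp add: AL_def)
    from sub_add[OF sub g this] have "(vadd X vzero, fadd \<gamma> \<delta>) \<in> L" .
    moreover have "fadd \<gamma> \<delta> = \<alpha>" unfolding \<delta>_def by (simp add: fadd_def fscale_def fun_eq_iff)
    ultimately show "p \<in> L" using pe by simp
  qed
  moreover have "L \<subseteq> orth n k L" using iso by (simp add: isotropic_def)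
  ultimately show ?thesis by (simp add: C1_def)
qed

lemma C3s_imp_C2w_C3w:
  assumes S: "std_iso n k L" and k: "1 \<le> k" and C: "C3s n k L"
  shows "C2w n k L \<and> C3w n k L"
proof -
  have sub: "is_subspace n k L" and iso: "isotropic n k L" and st: "standard n k L"
    using S by (auto simp: std_iso_def)
  have A: "Ann n k (prE L) = AL L" using C by (simp add: C3s_def)
  have L: "L = orth n k L" using C3s_imp_C1[OF S k C] by (simp add: C1_def)
  have c3w: "C3w n k L" using st A iso by (simp add: C3w_def standard_def)
  have "LV L = polar n (pr2 L)"
  proof
    show "LV L \<subseteq> polar n (pr2 L)"
    proof
      fix X assume "X \<in> LV L"
      then have xL: "(X, fzero) \<in> L" by (simp add: LV_def)
      have "contr X \<eta> = fzero" if "\<eta> \<in> pr2 L" for \<eta>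
      proof -
        obtain Y where b: "(Y, \<eta>) \<in> L" using pr2_ex[OF \<open>\<eta> \<in> pr2 L\<close>] by blast
        show ?thesis using iso_pair[OF iso xL b] by simp
      qed
      then show "X \<in> polar n (pr2 L)" using sub_mem[OF sub xL] by (simp add: polar_def)
    qed
  next
    show "polar n (pr2 L) \<subseteq> LV L"
    proof
      fix X assume X: "X \<in> polar n (pr2 L)"
      have "(X, fzero) \<in> orth n k L"
      proof (rule orthI)
        show "X \<in> Rn n" using X by (simp add: polar_def)
        show "fzero \<in> Forms n k" by (rule form_fzero)
        fix Y \<beta> assume "(Y, \<beta>) \<in> L"
        then have "\<beta> \<in> pr2 L" by (force simp: pr2_def)
        then show "fadd (contr X \<beta>) (contr Y fzero) = fzero" using X by (simp add: polar_def)
      qed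
      then show "X \<in> LV L" using L by (simp add: LV_def)
    qed
  qed
  then show ?thesis using c3w iso by (simp add: C2w_def)
qed

lemma vadd_plus: "vadd x y = x + y" by (simp add: vadd_def plus_fun_def)
lemma vzero_0: "vzero = 0" by (simp add: vzero_def zero_fun_def)

interpretation vs: vector_space vscale
  by unfold_locales (auto simp: vscale_def plus_fun_def algebra_simps)
interpretation vp: vector_space_pair vscale vscale by unfold_locales

lemma P_subspace:
  assumes F: "\<beta> \<in> Forms n k" and m: "m < k" and uR: "\<forall>i<k. u i \<in> Rn n"
  shows "vs.subspace {s \<in> Rn n. \<beta> (u(m := s)) = 0}"
  unfolding vs.subspace_def
proof (intro conjI ballI allI)
  have "\<beta> (u(m := vadd (vscale 0 vzero) (vscale 0 vzero))) = 0 * \<beta> (u(m := vzero)) + 0 * \<beta> (u(m := vzero))"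
    by (rule form_lin[OF F m uR]) simp_all
  then show "0 \<in> {s \<in> Rn n. \<beta> (u(m := s)) = 0}" by (simp add: vzero_0[symmetric])
next
  fix x y assume "x \<in> {s \<in> Rn n. \<beta> (u(m := s)) = 0}" "y \<in> {s \<in> Rn n. \<beta> (u(m := s)) = 0}"
  then show "x + y \<in> {s \<in> Rn n. \<beta> (u(m := s)) = 0}"
    using form_add_slot[OF F m uR, of x y] by (simp add: vadd_plus[symmetric])
next
  fix c x assume x: "x \<in> {s \<in> Rn n. \<beta> (u(m := s)) = 0}"
  have "\<beta> (u(m := vadd (vscale c x) (vscale 0 x))) = c * \<beta> (u(m := x)) + 0 * \<beta> (u(m := x))"
    by (rule form_lin[OF F m uR]) (use x in simp_all)
  then show "vscale c x \<in> {s \<in> Rn n. \<beta> (u(m := s)) = 0}" using x by simp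
qed

lemma hard:
  assumes k: "1 \<le> k" and bF: "\<beta> \<in> Forms n k" and bU: "\<forall>Y\<in>U. contr Y \<beta> = fzero"
    and bnz: "\<beta> \<noteq> fzero" and Usub: "vs.subspace U" and UR: "U \<subseteq> Rn n"
    and WR: "W \<in> Rn n" and WU: "W \<notin> U"
  shows "\<exists>\<alpha>\<in>Forms n k. (\<forall>Y\<in>U. contr Y \<alpha> = fzero) \<and> contr W \<alpha> \<noteq> fzero"
proof -
  obtain u where bu: "\<beta> u \<noteq> 0" using bnz by (auto simp: fun_eq_iff fzero_def)
  have uR: "\<forall>i<k. u i \<in> Rn n"
    using form_van[OF bF] bu by blast
  define R where "R m = U \<union> {u i | i. 1 \<le> i \<and> i < m}" for m
  show ?thesis
  proof (cases "\<exists>m. 1 \<le> m \<and> m < k \<and> \<beta> (u(m := W)) \<noteq> 0")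
    case True
    then obtain m where m: "1 \<le> m" "m < k" "\<beta> (u(m := W)) \<noteq> 0" by blast
    define w where "w = u(m := W)"
    define w' where "w' = w(0 := w m, m := w 0)"
    have "\<beta> w' = - \<beta> w" unfolding w'_def by (rule form_swap[OF bF]) (use m in auto)
    then have bw': "\<beta> w' \<noteq> 0" using m(3) w_def by simp
    have "case_nat W (\<lambda>i. w' (Suc i)) = w'"
      using m(1) by (auto simp: fun_eq_iff w'_def w_def split: nat.split)
    then have "contr W \<beta> (\<lambda>i. w' (Suc i)) = \<beta> w'" by (simp add: contr_def)
    then have "contr W \<beta> \<noteq> fzero" using bw' by (auto simp: fzero_def)
    then show ?thesis using bF bU by blast
  next
    case False
    have notin: "W \<notin> vs.span (R m)" if "m \<le> k" for m
      using that
    proof (induction m)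
      case 0
      have "R 0 = U" by (simp add: R_def)
      then show ?case using WU vs.span_eq_iff[THEN iffD2, OF Usub] by metis
    next
      case (Suc m)
      show ?case
      proof (cases "m = 0")
        case True
        have "R (Suc 0) = U" by (auto simp: R_def)
        then show ?thesis using WU vs.span_eq_iff[THEN iffD2, OF Usub] True by metis
      next
        case m0: False
        have IH: "W \<notin> vs.span (R m)" using Suc by simp
        have RS: "R (Suc m) = insert (u m) (R m)" using m0 by (auto simp: R_def less_Suc_eq)
        show ?thesis
        proof
          assume "W \<in> vs.span (R (Suc m))"
          then have "u m \<in> vs.span (insert W (R m))"
            using vs.in_span_insert IH RS by simp
          moreover have "vs.span (insert W (R m)) \<subseteq> {s \<in> Rn n. \<beta> (u(m := s)) = 0}"
          proof (rule vs.span_minimal[OF _ P_subspace[OF bF _ uR]])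
            show "m < k" using Suc by simp
            show "insert W (R m) \<subseteq> {s \<in> Rn n. \<beta> (u(m := s)) = 0}"
            proof
              fix s assume s: "s \<in> insert W (R m)"
              show "s \<in> {s \<in> Rn n. \<beta> (u(m := s)) = 0}"
              proof (cases "s = W")
                case True then show ?thesis using False WR m0 Suc by auto
              next
                case sW: False
                then have "s \<in> U \<or> (\<exists>i. s = u i \<and> 1 \<le> i \<and> i < m)" using s by (auto simp: R_def)
                then show ?thesis
                proof
                  assume "s \<in> U"
                  then show ?thesis using UR form_ann_slot[OF bF, of m s u] bU Suc by auto
                next
                  assume "\<exists>i. s = u i \<and> 1 \<le> i \<and> i < m"
                  then obtain i where i: "s = u i" "1 \<le> i" "i < m" by blast
                  have "\<beta> (u(m := u i)) = 0"
                    by (rule form_alt[OF bF, of i m]) (use i Suc in auto)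
                  then show ?thesis using i uR Suc by auto
                qed
              qed
            qed
          qed
          ultimately have "\<beta> (u(m := u m)) = 0" by blast
          then show False using bu by simp
        qed
      qed
    qed
    define S0 where "S0 = R k"
    have WS0: "W \<notin> vs.span S0" unfolding S0_def by (rule notin) simp
    obtain B where B: "B \<subseteq> S0" "vs.independent B" "S0 \<subseteq> vs.span B" "card B = vs.dim S0"
      by (rule vs.basis_exists[of S0])
    have spanB: "vs.span B \<subseteq> vs.span S0" using B(1) vs.span_mono by blast
    have WB: "W \<notin> vs.span B" using WS0 spanB by blast
    have WB': "W \<notin> B" using WB vs.span_superset by blast
    have indep: "vs.independent (insert W B)" using B(2) WB WB' vs.independent_insert by simp
    obtain g where g: "Vector_Spaces.linear vscale vscale g"
      and gv: "\<forall>x\<in>insert W B. g x = (if x = W then u 0 else x)"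
      using vp.linear_independent_extend[OF indep, of "\<lambda>x. if x = W then u 0 else x"] by blast
    have gid: "g x = x" if "x \<in> S0" for x
    proof -
      have "x \<in> vs.span B" using that B(3) by blast
      moreover have "\<forall>y\<in>B. g y = id y" using gv WB' by auto
      ultimately show ?thesis using vp.linear_eq_on_span[OF g vs.linear_id] by (metis id_apply)
    qed
    have gW: "g W = u 0" using gv by simp
    define tr :: "vec \<Rightarrow> vec" where "tr x = (\<lambda>i. if i < n then x i else 0)" for x
    define A where "A x = tr (g x)" for x
    have AR: "A x \<in> Rn n" for x by (simp add: A_def tr_def Rn_def)
    have trid: "x \<in> Rn n \<Longrightarrow> tr x = x" for x by (auto simp: tr_def Rn_def fun_eq_iff)
    have AS0: "x \<in> S0 \<Longrightarrow> x \<in> Rn n \<Longrightarrow> A x = x" for x by (simp add: A_def gid trid)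
    have AW: "A W = u 0" using gW uR k by (simp add: A_def trid)
    have Alin: "A (vadd (vscale a x) (vscale b y)) = vadd (vscale a (A x)) (vscale b (A y))" for a b x y
    proof -
      have "g (vadd (vscale a x) (vscale b y)) = vadd (vscale a (g x)) (vscale b (g y))"
        using vp.linear_add[OF g] vp.linear_scale[OF g] by (simp add: vadd_plus)
      then show ?thesis by (simp add: A_def tr_def vadd_def vscale_def fun_eq_iff)
    qed
    have AU: "A Y = Y" if "Y \<in> U" for Y using that UR by (intro AS0) (auto simp: S0_def R_def)
    define \<alpha> where "\<alpha> v = (if \<forall>i<k. v i \<in> Rn n then \<beta> (\<lambda>i. A (v i)) else 0)" for v
    have aF: "\<alpha> \<in> Forms n k"
      unfolding Forms_def mem_Collect_eq is_form_def
    proof (intro conjI allI impI)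
      fix v w :: "nat \<Rightarrow> vec" assume h: "\<forall>i<k. v i = w i"
      then have "\<beta> (\<lambda>i. A (v i)) = \<beta> (\<lambda>i. A (w i))" using form_dep[OF bF] by simp
      moreover have "(\<forall>i<k. v i \<in> Rn n) = (\<forall>i<k. w i \<in> Rn n)" using h by auto
      ultimately show "\<alpha> v = \<alpha> w" unfolding \<alpha>_def by presburger
    next
      fix v :: "nat \<Rightarrow> vec" assume "\<exists>i<k. v i \<notin> Rn n"
      then show "\<alpha> v = 0" by (auto simp: \<alpha>_def)
    next
      fix v :: "nat \<Rightarrow> vec" and i x y a b
      assume h: "i < k \<and> (\<forall>j<k. v j \<in> Rn n) \<and> x \<in> Rn n \<and> y \<in> Rn n"
      have e: "(\<lambda>j. A ((v(i := z)) j)) = (\<lambda>j. A (v j))(i := A z)" for z by (auto simp: fun_eq_iff)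
      have "\<beta> ((\<lambda>j. A (v j))(i := vadd (vscale a (A x)) (vscale b (A y)))) =
            a * \<beta> ((\<lambda>j. A (v j))(i := A x)) + b * \<beta> ((\<lambda>j. A (v j))(i := A y))"
        by (rule form_lin[OF bF]) (use h AR in auto)
      moreover      have r: "\<alpha> (v(i := z)) = \<beta> ((\<lambda>j. A (v j))(i := A z))" if z: "z \<in> Rn n" for z
      proof -
        have c: "\<forall>j<k. (v(i := z)) j \<in> Rn n" using h z by auto
        have "\<alpha> (v(i := z)) = \<beta> (\<lambda>j. A ((v(i := z)) j))" unfolding \<alpha>_def using c by (simp del: fun_upd_apply)
        then show ?thesis by (simp only: e)
      qed
      ultimately show "\<alpha> (v(i := vadd (vscale a x) (vscale b y))) = a * \<alpha> (v(i := x)) + b * \<alpha> (v(i := y))"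
        using h r[of x] r[of y] r[of "vadd (vscale a x) (vscale b y)"] by (simp add: Alin)
    next
      fix v :: "nat \<Rightarrow> vec" and i j assume h: "i < k \<and> j < k \<and> i \<noteq> j \<and> v i = v j"
      then have "\<beta> (\<lambda>l. A (v l)) = 0" by (intro form_alt[OF bF, of i j]) auto
      then show "\<alpha> v = 0" by (simp add: \<alpha>_def)
    qed
    have aU: "contr Y \<alpha> = fzero" if Y: "Y \<in> U" for Y
    proof (rule ext)
      fix v
      have "(\<lambda>i. A (case_nat Y v i)) = case_nat Y (\<lambda>i. A (v i))"
        using AU[OF Y] by (auto simp: fun_eq_iff split: nat.split)
      then have "\<beta> (\<lambda>i. A (case_nat Y v i)) = contr Y \<beta> (\<lambda>i. A (v i))" by (simp add: contr_def)
      also have "\<dots> = 0" using bU Y by simp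
      finally show "contr Y \<alpha> v = fzero v" by (simp add: contr_def \<alpha>_def)
    qed
    have "contr W \<alpha> (\<lambda>i. u (Suc i)) = \<beta> u"
    proof -
      have all: "\<forall>i<k. case_nat W (\<lambda>i. u (Suc i)) i \<in> Rn n"
        using WR uR by (auto split: nat.split)
      have "\<beta> (\<lambda>i. A (case_nat W (\<lambda>i. u (Suc i)) i)) = \<beta> u"
      proof (rule form_dep[OF bF], intro allI impI)
        fix i assume i: "i < k"
        show "A (case_nat W (\<lambda>i. u (Suc i)) i) = u i"
        proof (cases i)
          case 0 then show ?thesis using AW by simp
        next
          case (Suc j)
          have "u (Suc j) \<in> S0" using i Suc by (auto simp: S0_def R_def)
          then show ?thesis using AS0 uR i Suc by simp
        qed
      qed
      then show ?thesis using all by (simp add: contr_def \<alpha>_def)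
    qed
    then have "contr W \<alpha> \<noteq> fzero" using bu by (auto simp: fzero_def)
    then show ?thesis using aF aU by blast
  qed
qed

lemma C2s_imp_C1:
  assumes S: "std_iso n k L" and k: "1 \<le> k" and C: "C2s n k L"
  shows "C1 n k L"
proof -
  have sub: "is_subspace n k L" and iso: "isotropic n k L" and st: "standard n k L"
    using S by (auto simp: std_iso_def)
  have A2: "Ann n k (LV L) = pr2 L" using C by (simp add: C2s_def)
  have Usub: "vs.subspace (LV L)"
    unfolding vs.subspace_def
  proof (intro conjI ballI allI)
    show "0 \<in> LV L" using sub_zero[OF sub] by (simp add: LV_def vzero_0[symmetric])
    fix x y assume "x \<in> LV L" "y \<in> LV L"
    then show "x + y \<in> LV L" using sub_add[OF sub, of x fzero y fzero] by (simp add: LV_def vadd_plus)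
  next
    fix c x assume "x \<in> LV L"
    moreover have "fscale c fzero = fzero" by (simp add: fscale_def fzero_def)
    ultimately show "vscale c x \<in> LV L" using sub_scale[OF sub, of x fzero c] by (simp add: LV_def)
  qed
  have UR: "LV L \<subseteq> Rn n" using sub_mem[OF sub] by (auto simp: LV_def)
  have key: "W \<in> LV L" if WR: "W \<in> Rn n" and Wp: "\<forall>\<eta>\<in>pr2 L. contr W \<eta> = fzero" for W
  proof (cases "\<exists>\<beta>\<in>pr2 L. \<beta> \<noteq> fzero")
    case True
    then obtain \<beta> where b: "\<beta> \<in> pr2 L" "\<beta> \<noteq> fzero" by blast
    have bA: "\<beta> \<in> Ann n k (LV L)" using b A2 by simp
    show ?thesis
    proof (rule ccontr)
      assume WU: "W \<notin> LV L"
      have "\<exists>\<alpha>\<in>Forms n k. (\<forall>Y\<in>LV L. contr Y \<alpha> = fzero) \<and> contr W \<alpha> \<noteq> fzero"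
        by (rule hard[OF k _ _ b(2) Usub UR WR WU]) (use bA in \<open>auto simp: Ann_def\<close>)
      then obtain \<alpha> where "\<alpha> \<in> Forms n k" "\<forall>Y\<in>LV L. contr Y \<alpha> = fzero" "contr W \<alpha> \<noteq> fzero" by blast
      then have "\<alpha> \<in> pr2 L" "contr W \<alpha> \<noteq> fzero" using A2 by (auto simp: Ann_def)
      then show False using Wp by blast
    qed
  next
    case False
    have EU: "prE L = LV L"
    proof
      show "prE L \<subseteq> LV L"
      proof
        fix Y assume "Y \<in> prE L"
        then obtain \<beta> where b: "(Y, \<beta>) \<in> L" using prE_ex by blast
        then have "\<beta> \<in> pr2 L" by (force simp: pr2_def)
        then have "\<beta> = fzero" using False by blast
        then show "Y \<in> LV L" using b by (simp add: LV_def)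
      qed
      show "LV L \<subseteq> prE L" by (force simp: LV_def prE_def)
    qed
    have "W \<in> polar n (Ann n k (prE L))" using WR Wp A2 EU by (simp add: polar_def)
    then have "W \<in> prE L" using st by (simp add: standard_def)
    then show ?thesis using EU by simp
  qed
  have "orth n k L \<subseteq> L"
  proof
    fix p assume p: "p \<in> orth n k L"
    obtain X \<alpha> where pe: "p = (X, \<alpha>)" by (cases p)
    have XR: "X \<in> Rn n" and aF: "\<alpha> \<in> Forms n k" using orth_mem p pe by blast+
    have "\<alpha> \<in> Ann n k (LV L)"
    proof -
      have "contr Y \<alpha> = fzero" if "Y \<in> LV L" for Y
      proof -
        have "(Y, fzero) \<in> L" using that by (simp add: LV_def)
        then have "fadd (contr X fzero) (contr Y \<alpha>) = fzero" using orth_pair p pe by blast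
        then show ?thesis by simp
      qed
      then show ?thesis using aF by (simp add: Ann_def)
    qed
    then have "\<alpha> \<in> pr2 L" using A2 by simp
    then obtain Z where Z: "(Z, \<alpha>) \<in> L" using pr2_ex by blast
    have ZR: "Z \<in> Rn n" using sub_mem[OF sub Z] by blast
    define W where "W = vadd X (vscale (-1) Z)"
    have WR: "W \<in> Rn n" unfolding W_def by (intro Rn_add Rn_scale XR ZR)
    have "contr W \<eta> = fzero" if "\<eta> \<in> pr2 L" for \<eta>
    proof -
      obtain Y where Y: "(Y, \<eta>) \<in> L" using pr2_ex[OF \<open>\<eta> \<in> pr2 L\<close>] by blast
      have eF: "\<eta> \<in> Forms n k" using sub_mem[OF sub Y] by blast
      have 1: "fadd (contr X \<eta>) (contr Y \<alpha>) = fzero" using orth_pair p pe Y by blast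
      have 2: "fadd (contr Z \<eta>) (contr Y \<alpha>) = fzero" by (rule iso_pair[OF iso Z Y])
      have 3: "contr W \<eta> = fadd (contr X \<eta>) (fscale (-1) (contr Z \<eta>))"
        unfolding W_def by (rule contr_diff[OF eF k XR ZR])
      show ?thesis
      proof (rule ext)
        fix v
        from fun_cong[OF 1, of v] fun_cong[OF 2, of v] fun_cong[OF 3, of v]
        show "contr W \<eta> v = fzero v" by (simp add: fadd_def fscale_def)
      qed
    qed
    then have "W \<in> LV L" using key WR by blast
    then have "(W, fzero) \<in> L" by (simp add: LV_def)
    from sub_add[OF sub this Z] have "(vadd W Z, fadd fzero \<alpha>) \<in> L" .
    moreover have "vadd W Z = X" by (simp add: W_def vadd_def vscale_def)
    ultimately show "p \<in> L" using pe by simp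
  qed
  moreover have "L \<subseteq> orth n k L" using iso by (simp add: isotropic_def)
  ultimately show ?thesis by (simp add: C1_def)
qed

lemma general_part:
  assumes "2 \<le> k" "k \<le> n - 1" "std_iso n k L"
  shows "(C2s n k L \<longrightarrow> C1 n k L) \<and> (C1 n k L \<longleftrightarrow> C3s n k L) \<and> (C3s n k L \<longrightarrow> C2w n k L \<and> C3w n k L)"
proof -
  have k: "1 \<le> k" using assms by simp
  show ?thesis using C2s_imp_C1[OF assms(3) k] C1_imp_C3s[OF assms(3) k] C3s_imp_C1[OF assms(3) k]
      C3s_imp_C2w_C3w[OF assms(3) k] by blast
qed

definition uv :: "nat \<Rightarrow> vec" where "uv i = (\<lambda>l. if l = i then 1 else 0)"
definition ef :: "nat \<Rightarrow> nat \<Rightarrow> nat \<Rightarrow> form" where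
  "ef n i j v = (if v 0 \<in> Rn n \<and> v (Suc 0) \<in> Rn n then v 0 i * v (Suc 0) j - v 0 j * v (Suc 0) i else 0)"

lemma uv_Rn[simp]: "i < n \<Longrightarrow> uv i \<in> Rn n" by (simp add: uv_def Rn_def)
lemma uv_app[simp]: "uv i l = (if l = i then 1 else 0)" by (simp add: uv_def)

lemma ef_form: "ef n i j \<in> Forms n 2"
  unfolding Forms_def mem_Collect_eq is_form_def
proof (intro conjI allI impI)
  fix v w :: "nat \<Rightarrow> vec" assume "\<forall>l<2. v l = w l"
  then have "v 0 = w 0" "v (Suc 0) = w (Suc 0)" by auto
  then show "ef n i j v = ef n i j w" by (simp add: ef_def)
next
  fix v :: "nat \<Rightarrow> vec" assume "\<exists>l<2. v l \<notin> Rn n"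
  then have "v 0 \<notin> Rn n \<or> v (Suc 0) \<notin> Rn n" by (auto simp: less_2_cases_iff)
  then show "ef n i j v = 0" by (auto simp: ef_def)
next
  fix v :: "nat \<Rightarrow> vec" and l :: nat and x y a b
  assume h: "l < 2 \<and> (\<forall>j<2. v j \<in> Rn n) \<and> x \<in> Rn n \<and> y \<in> Rn n"
  then have "v 0 \<in> Rn n" "v (Suc 0) \<in> Rn n" "l = 0 \<or> l = Suc 0" by auto
  then show "ef n i j (v(l := vadd (vscale a x) (vscale b y))) = a * ef n i j (v(l := x)) + b * ef n i j (v(l := y))"
    using h by (auto simp: ef_def vadd_def vscale_def algebra_simps Rn_def)
next
  fix v :: "nat \<Rightarrow> vec" and l m assume h: "l < 2 \<and> m < 2 \<and> l \<noteq> m \<and> v l = v m"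
  then have "v 0 = v (Suc 0)" by (auto simp: less_2_cases_iff)
  then show "ef n i j v = 0" by (simp add: ef_def)
qed

lemma contr_ef: "contr X (ef n i j) = (\<lambda>v. if X \<in> Rn n \<and> v 0 \<in> Rn n then X i * v 0 j - X j * v 0 i else 0)"
  by (simp add: contr_def ef_def cong: if_cong)

lemma fadd_app: "fadd a b v = a v + b v" by (simp add: fadd_def)
lemma fscale_app: "fscale c a v = c * a v" by (simp add: fscale_def)

lemma contr_eval: "contr X \<alpha> = fzero \<Longrightarrow> contr X \<alpha> v = 0" by simp

lemma polar_ef:
  assumes "X \<in> Rn n" "contr X (ef n i j) = fzero" "i < n" "j < n" "i \<noteq> j"
  shows "X i = 0 \<and> X j = 0"
  using contr_eval[OF assms(2), of "\<lambda>l. uv j"] contr_eval[OF assms(2), of "\<lambda>l. uv i"] assms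
  by (simp add: contr_ef)

lemma param_subspace:
  fixes f :: "'p::real_vector \<Rightarrow> vec" and g :: "'p \<Rightarrow> form"
  assumes "\<And>p. f p \<in> Rn n" "\<And>p. g p \<in> Forms n k"
    "\<And>p q. f (p + q) = vadd (f p) (f q)" "\<And>c p. f (c *\<^sub>R p) = vscale c (f p)"
    "\<And>p q. g (p + q) = fadd (g p) (g q)" "\<And>c p. g (c *\<^sub>R p) = fscale c (g p)"
  shows "is_subspace n k (range (\<lambda>p. (f p, g p)))"
  unfolding is_subspace_def
proof (intro conjI ballI allI)
  show "range (\<lambda>p. (f p, g p)) \<subseteq> Rn n \<times> Forms n k" using assms(1,2) by auto
  have "f 0 = vzero" using assms(4)[of 0 0] by simp
  moreover have "g 0 = fzero" using assms(6)[of 0 0] by (simp add: fscale_def fzero_def)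
  moreover have "(f 0, g 0) \<in> range (\<lambda>p. (f p, g p))" by (rule rangeI)
  ultimately show "(vzero, fzero) \<in> range (\<lambda>p. (f p, g p))" by simp
next
  fix a b assume "a \<in> range (\<lambda>p. (f p, g p))" "b \<in> range (\<lambda>p. (f p, g p))"
  then obtain p q where "a = (f p, g p)" "b = (f q, g q)" by blast
  then show "(vadd (fst a) (fst b), fadd (snd a) (snd b)) \<in> range (\<lambda>p. (f p, g p))"
  proof -
    have "(f (p + q), g (p + q)) \<in> range (\<lambda>p. (f p, g p))" by (rule rangeI)
    then show ?thesis using assms(3,5)[of p q] \<open>a = (f p, g p)\<close> \<open>b = (f q, g q)\<close> by simp
  qed
next
  fix c a assume "a \<in> range (\<lambda>p. (f p, g p))"
  then obtain p where "a = (f p, g p)" by blast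
  then show "(vscale c (fst a), fscale c (snd a)) \<in> range (\<lambda>p. (f p, g p))"
  proof -
    have "(f (c *\<^sub>R p), g (c *\<^sub>R p)) \<in> range (\<lambda>p. (f p, g p))" by (rule rangeI)
    then show ?thesis using assms(4,6)[of c p] \<open>a = (f p, g p)\<close> by simp
  qed
qed

lemma iso_E_polar_AL:
  assumes sub: "is_subspace n k L" and iso: "isotropic n k L" and k: "1 \<le> k"
  shows "prE L \<subseteq> polar n (AL L)"
proof
  fix X assume "X \<in> prE L"
  then obtain \<gamma> where g: "(X, \<gamma>) \<in> L" using prE_ex by blast
  have "contr X \<alpha> = fzero" if "\<alpha> \<in> AL L" for \<alpha>
  proof -
    have a: "(vzero, \<alpha>) \<in> L" using that by (simp add: AL_def)
    have "fadd (contr X \<alpha>) (contr vzero \<gamma>) = fzero" by (rule iso_pair[OF iso g a])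
    moreover have "contr vzero \<gamma> = fzero" using contr_vzero[of \<gamma> n k] k sub_mem[OF sub g] by simp
    ultimately show ?thesis by simp
  qed
  then show "X \<in> polar n (AL L)" using sub_mem[OF sub g] by (simp add: polar_def)
qed

lemma prE_range: "prE (range (\<lambda>p. (f p, g p))) = range f" by (auto simp: prE_def image_iff)
lemma pr2_range: "pr2 (range (\<lambda>p. (f p, g p))) = range g" by (auto simp: pr2_def image_iff)

lemma vscale_vzero[simp]: "vscale c vzero = vzero" by (simp add: vscale_def vzero_def)
lemma fscale_fzero[simp]: "fscale c fzero = fzero" by (simp add: fscale_def fzero_def)

lemma iso_param:
  assumes "\<And>p. f p \<in> Rn n" "\<And>p. g p \<in> Forms n k"
    "\<And>p q. fadd (contr (f p) (g q)) (contr (f q) (g p)) = fzero"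
  shows "isotropic n k (range (\<lambda>p. (f p, g p)))"
  unfolding isotropic_def
proof
  fix x assume "x \<in> range (\<lambda>p. (f p, g p))"
  then obtain p where x: "x = (f p, g p)" by blast
  have "(f p, g p) \<in> orth n k (range (\<lambda>p. (f p, g p)))"
    by (rule orthI) (use assms in auto)
  then show "x \<in> orth n k (range (\<lambda>p. (f p, g p)))" using x by simp
qed

lemma vzero_polar: "S \<subseteq> Forms n k \<Longrightarrow> 1 \<le> k \<Longrightarrow> vzero \<in> polar n S"
  unfolding polar_def using contr_vzero by auto

definition pp :: "vec \<Rightarrow> vec \<Rightarrow> nat \<Rightarrow> vec" where "pp a b = (\<lambda>l. if l = 0 then a else b)"
lemma pp_simps[simp]: "pp a b 0 = a" "pp a b (Suc 0) = b" by (simp_all add: pp_def)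

lemma vec_eq_zero3: "X \<in> Rn 3 \<Longrightarrow> X 0 = 0 \<Longrightarrow> X 1 = 0 \<Longrightarrow> X 2 = 0 \<Longrightarrow> X = vzero"
proof (rule ext)
  fix l :: nat assume h: "X \<in> Rn 3" "X 0 = 0" "X 1 = 0" "X 2 = 0"
  consider "l = 0" | "l = 1" | "l = 2" | "l \<ge> 3" by arith
  then show "X l = vzero l" using h by cases (auto simp: vzero_def Rn_def)
qed

definition gc :: "real \<times> real \<Rightarrow> form" where
  "gc p = fadd (fscale (fst p) (ef 3 0 1)) (fscale (snd p) (ef 3 0 2))"
definition Lc :: "(vec \<times> form) set" where "Lc = range (\<lambda>p. (vzero, gc p))"

lemma gc_form: "gc p \<in> Forms 3 2" unfolding gc_def by (intro form_fadd form_fscale ef_form)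

lemma polar3: assumes "ef 3 0 1 \<in> S" "ef 3 0 2 \<in> S" shows "polar 3 S \<subseteq> {vzero}"
proof
  fix X assume X: "X \<in> polar 3 S"
  then have R: "X \<in> Rn 3" by (simp add: polar_def)
  have "contr X (ef 3 0 1) = fzero" "contr X (ef 3 0 2) = fzero" using X assms by (auto simp: polar_def)
  then have "X 0 = 0 \<and> X 1 = 0" "X 0 = 0 \<and> X 2 = 0" using polar_ef[OF R] by auto
  then show "X \<in> {vzero}" using vec_eq_zero3[OF R] by simp
qed

lemma exC: "std_iso 3 2 Lc \<and> C2w 3 2 Lc \<and> C3w 3 2 Lc \<and> \<not> C1 3 2 Lc"
proof -
  have sub: "is_subspace 3 2 Lc" unfolding Lc_def
  proof (rule param_subspace)
    show "\<And>p. gc p \<in> Forms 3 2" by (rule gc_form)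
  qed (simp_all add: gc_def fun_eq_iff fadd_def fscale_def algebra_simps)
  have iso: "isotropic 3 2 Lc" unfolding Lc_def
    by (rule iso_param) (simp_all add: gc_form contr_vzero[OF gc_form])
  have E: "prE Lc = {vzero}" unfolding Lc_def prE_range by auto
  have g1: "gc (1, 0) = ef 3 0 1" "gc (0, 1) = ef 3 0 2"
    by (simp_all add: gc_def fun_eq_iff fadd_def fscale_def)
  have AL: "AL Lc = range gc" by (auto simp: AL_def Lc_def)
  have P2: "pr2 Lc = range gc" unfolding Lc_def pr2_range ..
  have rg: "range gc \<subseteq> Forms 3 2" using gc_form by auto
  have pg: "polar 3 (range gc) = {vzero}"
  proof -
    have "ef 3 0 1 \<in> range gc" "ef 3 0 2 \<in> range gc" using g1 by (metis rangeI)+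
    then have "polar 3 (range gc) \<subseteq> {vzero}" by (rule polar3)
    moreover have "vzero \<in> polar 3 (range gc)" using vzero_polar[OF rg] by simp
    ultimately show ?thesis by blast
  qed
  have Ann0: "ef 3 0 1 \<in> Ann 3 2 {vzero}" "ef 3 0 2 \<in> Ann 3 2 {vzero}"
    by (simp_all add: Ann_def ef_form contr_vzero[OF ef_form])
  have "polar 3 (Ann 3 2 {vzero}) = {vzero}"
    using polar3[OF Ann0] vzero_polar[of "Ann 3 2 {vzero}" 3 2] by (auto simp: Ann_def)
  then have st: "standard 3 2 Lc" using E by (simp add: standard_def)
  have LV: "LV Lc = {vzero}" using sub_zero[OF sub] by (auto simp: LV_def Lc_def)
  have c2w: "C2w 3 2 Lc" using iso LV P2 pg by (simp add: C2w_def)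
  have c3w: "C3w 3 2 Lc" using iso E AL pg by (simp add: C3w_def)
  have notC1: "\<not> C1 3 2 Lc"
  proof
    assume "C1 3 2 Lc"
    moreover have "(vzero, ef 3 1 2) \<in> orth 3 2 Lc"
    proof (rule orthI)
      fix Y \<beta> assume "(Y, \<beta>) \<in> Lc"
      then have "Y = vzero" "\<beta> \<in> Forms 3 2" using gc_form by (auto simp: Lc_def)
      then show "fadd (contr vzero \<beta>) (contr Y (ef 3 1 2)) = fzero"
        using contr_vzero[of \<beta> 3 2] contr_vzero[OF ef_form, of 3 1 2] by simp
    qed (simp_all add: ef_form)
    ultimately have "(vzero, ef 3 1 2) \<in> Lc" by (simp add: C1_def)
    then obtain p where "ef 3 1 2 = gc p" by (auto simp: Lc_def)
    then have "ef 3 1 2 (pp (uv 1) (uv 2)) = gc p (pp (uv 1) (uv 2))" by simp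
    then show False by (simp add: gc_def ef_def fadd_def fscale_def)
  qed
  show ?thesis using sub iso st c2w c3w notC1 by (simp add: std_iso_def)
qed

lemma vec_eq4: "X \<in> Rn 4 \<Longrightarrow> X 1 = 0 \<Longrightarrow> X 2 = 0 \<Longrightarrow> X 3 = 0 \<Longrightarrow> X = vscale (X 0) (uv 0)"
proof (rule ext)
  fix l :: nat assume h: "X \<in> Rn 4" "X 1 = 0" "X 2 = 0" "X 3 = 0"
  consider "l = 0" | "l = 1" | "l = 2" | "l = 3" | "l \<ge> 4" by arith
  then show "X l = vscale (X 0) (uv 0) l" using h by cases (auto simp: vscale_def Rn_def)
qed

lemma vec_eq5: "X \<in> Rn 5 \<Longrightarrow> X 2 = 0 \<Longrightarrow> X 3 = 0 \<Longrightarrow> X 4 = 0 \<Longrightarrow>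
   X = vadd (vscale (X 0) (uv 0)) (vscale (X 1) (uv 1))"
proof (rule ext)
  fix l :: nat assume h: "X \<in> Rn 5" "X 2 = 0" "X 3 = 0" "X 4 = 0"
  consider "l = 0" | "l = 1" | "l = 2" | "l = 3" | "l = 4" | "l \<ge> 5" by arith
  then show "X l = vadd (vscale (X 0) (uv 0)) (vscale (X 1) (uv 1)) l" using h
    by cases (auto simp: vscale_def vadd_def Rn_def)
qed

lemma vec_eq_zero5: "X \<in> Rn 5 \<Longrightarrow> X 0 = 0 \<Longrightarrow> X 1 = 0 \<Longrightarrow> X 2 = 0 \<Longrightarrow> X 3 = 0 \<Longrightarrow> X 4 = 0 \<Longrightarrow> X = vzero"
proof (rule ext)
  fix l :: nat assume h: "X \<in> Rn 5" "X 0 = 0" "X 1 = 0" "X 2 = 0" "X 3 = 0" "X 4 = 0"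
  consider "l = 0" | "l = 1" | "l = 2" | "l = 3" | "l = 4" | "l \<ge> 5" by arith
  then show "X l = vzero l" using h by cases (auto simp: vzero_def Rn_def)
qed

lemmas evs = contr_fadd contr_fscale contr_ef fadd_app fscale_app vscale_def vadd_def vzero_def

definition fa :: "real \<times> real \<times> real \<Rightarrow> vec" where "fa p = vscale (fst p) (uv 0)"
definition ga :: "real \<times> real \<times> real \<Rightarrow> form" where
  "ga p = fadd (fscale (fst p) (ef 4 2 3)) (fadd (fscale (fst (snd p)) (ef 4 1 2)) (fscale (snd (snd p)) (ef 4 1 3)))"
definition La :: "(vec \<times> form) set" where "La = range (\<lambda>p. (fa p, ga p))"

lemma ga_form: "ga p \<in> Forms 4 2" unfolding ga_def by (intro form_fadd form_fscale ef_form)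
lemma fa_Rn: "fa p \<in> Rn 4" by (simp add: fa_def)

lemma contr_fa_ef: "i \<noteq> 0 \<Longrightarrow> j \<noteq> 0 \<Longrightarrow> contr (fa p) (ef 4 i j) = fzero"
  by (simp add: fun_eq_iff contr_ef fa_def vscale_def cong: if_cong)

lemma contr_fa_ga: "contr (fa p) (ga q) = fzero"
  unfolding ga_def by (simp add: contr_fadd contr_fscale contr_fa_ef)

lemma polar_a: assumes "ef 4 1 2 \<in> S" "ef 4 1 3 \<in> S" shows "polar 4 S \<subseteq> range fa"
proof
  fix X assume X: "X \<in> polar 4 S"
  then have R: "X \<in> Rn 4" by (simp add: polar_def)
  have "contr X (ef 4 1 2) = fzero" "contr X (ef 4 1 3) = fzero" using X assms by (auto simp: polar_def)
  then have "X 1 = 0 \<and> X 2 = 0" "X 1 = 0 \<and> X 3 = 0" using polar_ef[OF R] by auto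
  then have "X = fa (X 0, 0, 0)" using vec_eq4[OF R] by (simp add: fa_def)
  then show "X \<in> range fa" by (metis rangeI)
qed

lemma exA: "std_iso 4 2 La \<and> C3w 4 2 La \<and> \<not> C2w 4 2 La"
proof -
  have sub: "is_subspace 4 2 La" unfolding La_def
  proof (rule param_subspace)
    show "\<And>p. ga p \<in> Forms 4 2" by (rule ga_form)
    show "\<And>p. fa p \<in> Rn 4" by (rule fa_Rn)
  qed (simp_all add: fa_def ga_def fun_eq_iff fadd_def fscale_def vadd_def vscale_def algebra_simps)
  have iso: "isotropic 4 2 La" unfolding La_def
    by (rule iso_param) (simp_all add: ga_form fa_Rn contr_fa_ga)
  have E: "prE La = range fa" unfolding La_def prE_range ..
  have Ann: "ef 4 1 2 \<in> Ann 4 2 (range fa)" "ef 4 1 3 \<in> Ann 4 2 (range fa)"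
    by (auto simp: Ann_def ef_form contr_fa_ef)
  have ER: "range fa \<subseteq> Rn 4" using fa_Rn by auto
  have st: "standard 4 2 La"
    using polar_a[OF Ann] E_sub_polar_Ann[of La 4 2] E ER unfolding standard_def by auto
  have a1: "(fa (0, 1, 0), ga (0, 1, 0)) \<in> La" "(fa (0, 0, 1), ga (0, 0, 1)) \<in> La" unfolding La_def by (rule rangeI)+
  have "fa (0, 1, 0) = vzero" "fa (0, 0, 1) = vzero" by (simp_all add: fa_def)
  moreover have "ga (0, 1, 0) = ef 4 1 2" "ga (0, 0, 1) = ef 4 1 3"
    by (simp_all add: ga_def fun_eq_iff fadd_def fscale_def)
  ultimately have "ef 4 1 2 \<in> AL La" "ef 4 1 3 \<in> AL La" using a1 by (simp_all add: AL_def)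
  then have "polar 4 (AL La) \<subseteq> prE La" using polar_a E by simp
  moreover have "prE La \<subseteq> polar 4 (AL La)" by (rule iso_E_polar_AL[OF sub iso]) simp
  ultimately have c3w: "C3w 4 2 La" using iso by (simp add: C3w_def)
  have "uv 0 \<in> polar 4 (pr2 La)"
    unfolding La_def pr2_range polar_def using fa_def contr_fa_ga[of "(1,0,0)"] by (auto simp: fa_def)
  moreover have "uv 0 \<notin> LV La"
  proof
    assume "uv 0 \<in> LV La"
    then obtain p where p: "uv 0 = fa p" "fzero = ga p" by (auto simp: LV_def La_def)
    have "fst p = 1" using fun_cong[OF p(1), of 0] by (simp add: fa_def vscale_def)
    moreover have "ga p (pp (uv 2) (uv 3)) = 0" using p(2) by (metis fzero_app)
    ultimately show False by (simp add: ga_def fadd_def fscale_def ef_def)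
  qed
  ultimately have "\<not> C2w 4 2 La" by (auto simp: C2w_def)
  then show ?thesis using sub iso st c3w by (simp add: std_iso_def)
qed

definition fb :: "real \<times> real \<Rightarrow> vec" where "fb p = vadd (vscale (fst p) (uv 0)) (vscale (snd p) (uv 1))"
definition F0 :: form where "F0 = fadd (ef 5 1 2) (ef 5 3 4)"
definition F1 :: form where "F1 = fadd (ef 5 2 0) (ef 5 3 4)"
definition gb :: "real \<times> real \<Rightarrow> form" where "gb p = fadd (fscale (fst p) F0) (fscale (snd p) F1)"
definition Lb :: "(vec \<times> form) set" where "Lb = range (\<lambda>p. (fb p, gb p))"

lemma gb_form: "gb p \<in> Forms 5 2" unfolding gb_def F0_def F1_def by (intro form_fadd form_fscale ef_form)
lemma fb_Rn: "fb p \<in> Rn 5" by (simp add: fb_def)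

lemma iso_b: "fadd (contr (fb p) (gb q)) (contr (fb q) (gb p)) = fzero"
proof (rule ext)
  fix v
  show "fadd (contr (fb p) (gb q)) (contr (fb q) (gb p)) v = fzero v"
    by (simp add: gb_def F0_def F1_def evs fb_Rn cong: if_cong) (simp add: fb_def vadd_def vscale_def algebra_simps)
qed

lemma polar_b: assumes "ef 5 2 3 \<in> S" "ef 5 3 4 \<in> S" shows "polar 5 S \<subseteq> range fb"
proof
  fix X assume X: "X \<in> polar 5 S"
  then have R: "X \<in> Rn 5" by (simp add: polar_def)
  have "contr X (ef 5 2 3) = fzero" "contr X (ef 5 3 4) = fzero" using X assms by (auto simp: polar_def)
  then have "X 2 = 0 \<and> X 3 = 0" "X 3 = 0 \<and> X 4 = 0" using polar_ef[OF R] by auto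
  then have "X = fb (X 0, X 1)" using vec_eq5[OF R] by (simp add: fb_def)
  then show "X \<in> range fb" by (metis rangeI)
qed

lemma contr_fb_ef: "i \<ge> 2 \<Longrightarrow> j \<ge> 2 \<Longrightarrow> contr (fb p) (ef 5 i j) = fzero"
  by (simp add: fun_eq_iff contr_ef fb_def vscale_def vadd_def cong: if_cong)

lemma exB: "std_iso 5 2 Lb \<and> C2w 5 2 Lb \<and> \<not> C3w 5 2 Lb"
proof -
  have sub: "is_subspace 5 2 Lb" unfolding Lb_def
  proof (rule param_subspace)
    show "\<And>p. gb p \<in> Forms 5 2" by (rule gb_form)
    show "\<And>p. fb p \<in> Rn 5" by (rule fb_Rn)
  qed (simp_all add: fb_def gb_def fun_eq_iff fadd_def fscale_def vadd_def vscale_def algebra_simps)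
  have iso: "isotropic 5 2 Lb" unfolding Lb_def
    by (rule iso_param) (simp_all add: gb_form fb_Rn iso_b)
  have E: "prE Lb = range fb" unfolding Lb_def prE_range ..
  have Ann: "ef 5 2 3 \<in> Ann 5 2 (range fb)" "ef 5 3 4 \<in> Ann 5 2 (range fb)"
    by (auto simp: Ann_def ef_form contr_fb_ef)
  have ER: "range fb \<subseteq> Rn 5" using fb_Rn by auto
  have st: "standard 5 2 Lb"
    using polar_b[OF Ann] E_sub_polar_Ann[of Lb 5 2] E ER unfolding standard_def by auto
  have LV: "LV Lb = {vzero}"
  proof
    show "LV Lb \<subseteq> {vzero}"
    proof
      fix X assume "X \<in> LV Lb"
      then obtain p where p: "X = fb p" "fzero = gb p" by (auto simp: LV_def Lb_def)
      have "gb p (pp (uv 1) (uv 2)) = 0" "gb p (pp (uv 2) (uv 0)) = 0" using p(2) by (metis fzero_app)+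
      then have "fst p = 0" "snd p = 0" by (simp_all add: gb_def F0_def F1_def fadd_def fscale_def ef_def)
      then show "X \<in> {vzero}" using p(1) by (simp add: fb_def)
    qed
    show "{vzero} \<subseteq> LV Lb" using sub_zero[OF sub] by (simp add: LV_def)
  qed
  have g10: "gb (1, 0) = F0" "gb (0, 1) = F1" by (simp_all add: gb_def fun_eq_iff fadd_def fscale_def)
  have "polar 5 (pr2 Lb) \<subseteq> {vzero}"
  proof
    fix X assume X: "X \<in> polar 5 (pr2 Lb)"
    then have R: "X \<in> Rn 5" by (simp add: polar_def)
    have "F0 \<in> pr2 Lb" "F1 \<in> pr2 Lb" unfolding Lb_def pr2_range using g10 by (metis rangeI)+
    then have c: "contr X F0 = fzero" "contr X F1 = fzero" using X by (auto simp: polar_def)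
    have "contr X F0 (\<lambda>l. uv m) = 0" "contr X F1 (\<lambda>l. uv m) = 0" for m using c by simp_all
    note cc = this[unfolded F0_def F1_def, simplified evs]
    have "X 1 = 0" "X 2 = 0" "X 3 = 0" "X 4 = 0" "X 0 = 0"
      using cc(1)[of 2] cc(1)[of 1] cc(1)[of 4] cc(1)[of 3] cc(2)[of 2] R by simp_all
    then show "X \<in> {vzero}" using vec_eq_zero5[OF R] by simp
  qed
  moreover have "vzero \<in> polar 5 (pr2 Lb)"
    by (rule vzero_polar[of _ 5 2]) (auto simp: Lb_def pr2_range gb_form)
  ultimately have "polar 5 (pr2 Lb) = {vzero}" by blast
  then have c2w: "C2w 5 2 Lb" using iso LV by (simp add: C2w_def)
  have AL: "AL Lb \<subseteq> {fzero}"
  proof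
    fix \<alpha> assume "\<alpha> \<in> AL Lb"
    then obtain p where p: "vzero = fb p" "\<alpha> = gb p" by (auto simp: AL_def Lb_def)
    have "fst p = 0" "snd p = 0" using fun_cong[OF p(1), of 0] fun_cong[OF p(1), of 1]
      by (simp_all add: fb_def vadd_def vscale_def vzero_def)
    then show "\<alpha> \<in> {fzero}" using p(2) by (simp add: gb_def fun_eq_iff fadd_def fscale_def)
  qed
  have "uv 2 \<in> polar 5 (AL Lb)" using AL by (auto simp: polar_def)
  moreover have "uv 2 \<notin> prE Lb"
  proof
    assume "uv 2 \<in> prE Lb"
    then obtain p where "uv 2 = fb p" by (auto simp: E)
    from fun_cong[OF this, of 2] show False by (simp add: fb_def vadd_def vscale_def)
  qed
  ultimately have "\<not> C3w 5 2 Lb" by (auto simp: C3w_def)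
  then show ?thesis using sub iso st c2w by (simp add: std_iso_def)
qed

definition Bd :: "vec \<Rightarrow> form" where
  "Bd X = fadd (fscale (X 0) (ef 5 1 2)) (fadd (fscale (- X 1) (ef 5 0 2))
     (fadd (fscale (X 2) (fadd (ef 5 0 1) (ef 5 3 4))) (fadd (fscale (- X 3) (ef 5 2 4)) (fscale (X 4) (ef 5 2 3)))))"
definition Ld :: "(vec \<times> form) set" where "Ld = (\<lambda>X. (X, Bd X)) ` Rn 5"

lemma Bd_form: "Bd X \<in> Forms 5 2" unfolding Bd_def by (intro form_fadd form_fscale ef_form)

lemma iso_d: "X \<in> Rn 5 \<Longrightarrow> Y \<in> Rn 5 \<Longrightarrow> fadd (contr X (Bd Y)) (contr Y (Bd X)) = fzero"
  by (rule ext) (simp add: Bd_def evs cong: if_cong, simp add: algebra_simps)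

lemma exD: "std_iso 5 2 Ld \<and> C3s 5 2 Ld \<and> \<not> C2s 5 2 Ld"
proof -
  have sub: "is_subspace 5 2 Ld"
    unfolding is_subspace_def
  proof (intro conjI ballI allI)
    show "Ld \<subseteq> Rn 5 \<times> Forms 5 2" using Bd_form by (auto simp: Ld_def)
    have "Bd vzero = fzero" by (simp add: Bd_def fun_eq_iff fadd_def fscale_def vzero_def)
    then show "(vzero, fzero) \<in> Ld" unfolding Ld_def by (metis Rn_zero image_eqI)
  next
    fix a b assume "a \<in> Ld" "b \<in> Ld"
    then obtain X Y where XY: "a = (X, Bd X)" "b = (Y, Bd Y)" "X \<in> Rn 5" "Y \<in> Rn 5" by (auto simp: Ld_def)
    have "Bd (vadd X Y) = fadd (Bd X) (Bd Y)" by (simp add: Bd_def fun_eq_iff fadd_def fscale_def vadd_def algebra_simps)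
    moreover have "(vadd X Y, Bd (vadd X Y)) \<in> Ld" using XY by (simp add: Ld_def)
    ultimately show "(vadd (fst a) (fst b), fadd (snd a) (snd b)) \<in> Ld" using XY by simp
  next
    fix c a assume "a \<in> Ld"
    then obtain X where X: "a = (X, Bd X)" "X \<in> Rn 5" by (auto simp: Ld_def)
    have "Bd (vscale c X) = fscale c (Bd X)" by (simp add: Bd_def fun_eq_iff fadd_def fscale_def vscale_def algebra_simps)
    moreover have "(vscale c X, Bd (vscale c X)) \<in> Ld" using X by (simp add: Ld_def)
    ultimately show "(vscale c (fst a), fscale c (snd a)) \<in> Ld" using X by simp
  qed
  have iso: "isotropic 5 2 Ld"
    unfolding isotropic_def
  proof
    fix x assume "x \<in> Ld"
    then obtain X where X: "x = (X, Bd X)" "X \<in> Rn 5" by (auto simp: Ld_def)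
    have "(X, Bd X) \<in> orth 5 2 Ld"
    proof (rule orthI)
      fix Y \<beta> assume "(Y, \<beta>) \<in> Ld"
      then have "\<beta> = Bd Y" "Y \<in> Rn 5" by (auto simp: Ld_def)
      then show "fadd (contr X \<beta>) (contr Y (Bd X)) = fzero" using iso_d X(2) by simp
    qed (simp_all add: X Bd_form)
    then show "x \<in> orth 5 2 Ld" using X by simp
  qed
  have E: "prE Ld = Rn 5" by (force simp: prE_def Ld_def)
  have st: "standard 5 2 Ld"
    using E_sub_polar_Ann[of Ld 5 2] E unfolding standard_def by (auto simp: polar_def)
  have A1: "Ann 5 2 (Rn 5) = {fzero}"
  proof
    show "Ann 5 2 (Rn 5) \<subseteq> {fzero}" using form_eq_zero[of _ 5 2] by (auto simp: Ann_def)
    show "{fzero} \<subseteq> Ann 5 2 (Rn 5)" by (simp add: Ann_def form_fzero)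
  qed
  have A2: "AL Ld = {fzero}"
  proof
    show "AL Ld \<subseteq> {fzero}"
    proof
      fix \<alpha> assume "\<alpha> \<in> AL Ld"
      then have "\<alpha> = Bd vzero" by (auto simp: AL_def Ld_def)
      then show "\<alpha> \<in> {fzero}" by (simp add: Bd_def fun_eq_iff fadd_def fscale_def vzero_def)
    qed
    show "{fzero} \<subseteq> AL Ld" using sub_zero[OF sub] by (simp add: AL_def)
  qed
  have c3s: "C3s 5 2 Ld" using iso A1 A2 E by (simp add: C3s_def)
  have "ef 5 0 1 \<in> Ann 5 2 (LV Ld)"
  proof -
    have "contr Y (ef 5 0 1) = fzero" if "Y \<in> LV Ld" for Y
    proof -
      have Y: "Y \<in> Rn 5" "Bd Y = fzero" using \<open>Y \<in> LV Ld\<close> by (auto simp: LV_def Ld_def)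
      have "Bd Y (pp (uv a) (uv b)) = 0" for a b using Y(2) by simp
      note cc = this[unfolded Bd_def, simplified fadd_app fscale_app ef_def]
      have "Y 0 = 0" "Y 1 = 0" "Y 2 = 0" "Y 3 = 0" "Y 4 = 0"
        using cc[of 1 2] cc[of 0 2] cc[of 0 1] cc[of 2 4] cc[of 2 3] by simp_all
      then have "Y = vzero" using vec_eq_zero5[OF Y(1)] by simp
      then show ?thesis using contr_vzero[OF ef_form, of 5 0 1] by simp
    qed
    then show ?thesis by (simp add: Ann_def ef_form)
  qed
  moreover have "ef 5 0 1 \<notin> pr2 Ld"
  proof
    assume "ef 5 0 1 \<in> pr2 Ld"
    then obtain X where "ef 5 0 1 = Bd X" by (auto simp: pr2_def Ld_def)
    then have "ef 5 0 1 (pp (uv 0) (uv 1)) = Bd X (pp (uv 0) (uv 1))"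
      "ef 5 0 1 (pp (uv 3) (uv 4)) = Bd X (pp (uv 3) (uv 4))" by simp_all
    then show False by (simp add: Bd_def fadd_def fscale_def ef_def)
  qed
  ultimately have "\<not> C2s 5 2 Ld" by (auto simp: C2s_def)
  then show ?thesis using sub iso st c3s by (simp add: std_iso_def)
qed

theorem propositionA2:
  shows "(\<forall>n k L. 2 \<le> k \<and> k \<le> n - 1 \<and> std_iso n k L \<longrightarrow>
            (C2s n k L \<longrightarrow> C1 n k L) \<and> (C1 n k L \<longleftrightarrow> C3s n k L) \<and>
            (C3s n k L \<longrightarrow> C2w n k L \<and> C3w n k L)) \<and>
         (\<exists>n k L. 2 \<le> k \<and> k \<le> n - 1 \<and> std_iso n k L \<and> C3w n k L \<and> \<not> C2w n k L) \<and>
         (\<exists>n k L. 2 \<le> k \<and> k \<le> n - 1 \<and> std_iso n k L \<and> C2w n k L \<and> \<not> C3w n k L) \<and>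
         (\<exists>n k L. 2 \<le> k \<and> k \<le> n - 1 \<and> std_iso n k L \<and> C2w n k L \<and> C3w n k L \<and> \<not> C1 n k L) \<and>
         (\<exists>n k L. 2 \<le> k \<and> k \<le> n - 1 \<and> std_iso n k L \<and> C3s n k L \<and> \<not> C2s n k L)"
  proof -
  have 1: "\<forall>n k L. 2 \<le> k \<and> k \<le> n - 1 \<and> std_iso n k L \<longrightarrow>
            (C2s n k L \<longrightarrow> C1 n k L) \<and> (C1 n k L \<longleftrightarrow> C3s n k L) \<and>
            (C3s n k L \<longrightarrow> C2w n k L \<and> C3w n k L)"
    using general_part by blast
  have 2: "\<exists>n k L. 2 \<le> k \<and> k \<le> n - 1 \<and> std_iso n k L \<and> C3w n k L \<and> \<not> C2w n k L"
    using exA by (intro exI[of _ 4] exI[of _ 2] exI[of _ La]) simp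
  have 3: "\<exists>n k L. 2 \<le> k \<and> k \<le> n - 1 \<and> std_iso n k L \<and> C2w n k L \<and> \<not> C3w n k L"
    using exB by (intro exI[of _ 5] exI[of _ 2] exI[of _ Lb]) simp
  have 4: "\<exists>n k L. 2 \<le> k \<and> k \<le> n - 1 \<and> std_iso n k L \<and> C2w n k L \<and> C3w n k L \<and> \<not> C1 n k L"
    using exC by (intro exI[of _ 3] exI[of _ 2] exI[of _ Lc]) simp
  have 5: "\<exists>n k L. 2 \<le> k \<and> k \<le> n - 1 \<and> std_iso n k L \<and> C3s n k L \<and> \<not> C2s n k L"
    using exD by (intro exI[of _ 5] exI[of _ 2] exI[of _ Ld]) simp
  show ?thesis using 1 2 3 4 5 by blast
qed

end
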